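(* Consider the space--time hybridized discontinuous Galerkin discretization described in the context, on a space--time slab $\mathcal{E}^n$ with polynomial degree $k\ge 1$. Let $\boldsymbol{w}_h^\star=(\boldsymbol{w}_h,\bar{\boldsymbol{w}}_h)\in \boldsymbol{V}_h^{n,\star}$ be given, let $\boldsymbol{f}$, $\boldsymbol{g}$ and $\boldsymbol{u}_h^-$ be given data, and suppose $(\boldsymbol{u}_h^\star,p_h^\star)=((\boldsymbol{u}_h,\bar{\boldsymbol{u}}_h),(p_h,\bar p_h))\in \boldsymbol{V}_h^{n,\star}\times Q_h^{n,\star}$ satisfies $$ t_h^n(\boldsymbol{u}_h^{\star}, \boldsymbol{w}_h^{\star}, \boldsymbol{v}_h^{\star}) + a_h^n(\boldsymbol{u}_h^{\star}, \boldsymbol{v}_h^{\star}) + b_h^n(p_h^{\star}, \boldsymbol{v}_h^{\star}) - b_h^n(q_h^{\star}, \boldsymbol{u}_h^{\star}) = \sum_{\mathcal{K}\in\mathcal{T}^n} \int_{\mathcal{K}} \boldsymbol{f} \cdot \boldsymbol{v}_h \,d\boldsymbol{x}\, dt - \sum_{\mathcal{S}\in\mathcal{F}^n_N}\int_{\mathcal{S}} \boldsymbol{g} \cdot \bar{\boldsymbol{v}}_h \,ds + \int_{\Omega^n}\boldsymbol{u}_h^- \cdot \boldsymbol{v}_h \,d\boldsymbol{x} $$ for all $(\boldsymbol{v}_h^\star,q_h^\star)\in \boldsymbol{V}_h^{n,\star}\times Q_h^{n,\star}$. Then $\nabla\cdot\boldsymbol{u}_h=0$ pointwise in every space--time cell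 $\mathcal{K}\in\mathcal{T}^n$, $\boldsymbol{u}_h\cdot\boldsymbol{n}$ is single-valued on every interior facet $\mathcal{S}\in\mathcal{F}^n_I$ (i.e. $\boldsymbol{u}_h$ is $H(\mathrm{div})$-conforming), and $\boldsymbol{u}_h\cdot\boldsymbol{n}=\bar{\boldsymbol{u}}_h\cdot\boldsymbol{n}$ on every boundary facet $\mathcal{S}\in\mathcal{F}^n_B$.
   Context: Let $\Omega(t)\subset\mathbb{R}^d$ ($d=2,3$) be a time-dependent polygonal/polyhedral domain, $0=t^0<\dots<t^N=T$, and the space--time slab $\mathcal{E}^n=\{(t,\boldsymbol{x}):t\in(t^n,t^{n+1}),\boldsymbol{x}\in\Omega(t)\}$, with $\Omega^n=\Omega(t^n)$. The space--time boundary $\partial\mathcal{E}$ (apart from the initial and final time slices) is split into a Dirichlet part $\partial\mathcal{E}^D$ and a Neumann part $\partial\mathcal{E}^N$. The slab is triangulated by a conforming mesh $\mathcal{T}^n$ of $(d+1)$-dimensional space--time simplices $\mathcal{K}$ (of size $h_{\mathcal{K}}$), with outward space--time unit normal $(n_t,\boldsymbol{n})$, $n_t\in\mathbb{R}$, $\boldsymbol{n}\in\mathbb{R}^d$. Facets of $\partial\mathcal{K}$ with $n_t=-1$ (resp. $n_t=1$) are denoted $K^n$ (resp. $K^{n+1}$) and lie in $\Omega^n$ (resp. $\Omega^{n+1}$); $\mathcal{Q}_{\mathcal{K}}=\partial\mathcal{K}\setminus(K^n\cup K^{n+1})$. $\mathcal{F}^n$ is the set of facets with $|n_t|\neq1$,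 split into interior facets $\mathcal{F}^n_I$ and boundary facets $\mathcal{F}^n_B$; $\mathcal{F}^n_N$ are the facets on $\partial\mathcal{E}^N$. Throughout, $\nabla$, $\nabla\cdot$ denote spatial gradient/divergence and $\partial\boldsymbol{v}/\partial\boldsymbol{n}=(\nabla\boldsymbol{v})\boldsymbol{n}$. Spaces: $\boldsymbol{V}_h^n$ = discontinuous $[P_k(\mathcal{K})]^d$ functions on $\mathcal{T}^n$; $Q_h^n$ = discontinuous $P_{k-1}(\mathcal{K})$ functions; $\bar{\boldsymbol{V}}_h^n$ = $[P_k(\mathcal{S})]^d$ functions on each facet of $\mathcal{F}^n$ (single-valued on facets), vanishing on $\partial\mathcal{E}^D$; $\bar Q_h^n$ = $P_k(\mathcal{S})$ functions on facets of $\mathcal{F}^n$; $\boldsymbol{V}_h^{n,\star}=\boldsymbol{V}_h^n\times\bar{\boldsymbol{V}}_h^n$, $Q_h^{n,\star}=Q_h^n\times\bar Q_h^n$. With $\nu>0$ and penalty $\alpha>0$: $a_h^n(\boldsymbol{u}^\star,\boldsymbol{v}^\star)=\sum_{\mathcal{K}}\int_{\mathcal{K}}\nu\nabla\boldsymbol{u}:\nabla\boldsymbol{v}+\sum_{\mathcal{K}}\int_{\mathcal{Q}_{\mathcal{K}}}\frac{\nu\alpha}{h_{\mathcal{K}}}(\boldsymbol{u}-\bar{\boldsymbol{u}})\cdot(\boldsymbol{v}-\bar{\boldsymbol{v}})-\sum_{\mathcal{K}}\int_{\mathcal{Q}_{\mathcal{K}}}\nu[(\boldsymbol{u}-\bar{\boldsymbol{u}})\cdot\frac{\partial\boldsymbol{v}}{\partial\boldsymbol{n}}+\frac{\partial\boldsymbol{u}}{\partial\boldsymbol{n}}\cdot(\boldsymbol{v}-\bar{\boldsymbol{v}})]$;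 $b_h^n(p^\star,\boldsymbol{v}^\star)=-\sum_{\mathcal{K}}\int_{\mathcal{K}}p\,\nabla\cdot\boldsymbol{v}+\sum_{\mathcal{K}}\int_{\mathcal{Q}_{\mathcal{K}}}(\boldsymbol{v}-\bar{\boldsymbol{v}})\cdot\boldsymbol{n}\,\bar p$; $t_h^n(\boldsymbol{u}^\star,\boldsymbol{w}^\star,\boldsymbol{v}^\star)=-\sum_{\mathcal{K}}\int_{\mathcal{K}}(\boldsymbol{u}\cdot\partial_t\boldsymbol{v}+\boldsymbol{u}\otimes\boldsymbol{w}:\nabla\boldsymbol{v})+\sum_{\mathcal{K}}\int_{K^{n+1}}\boldsymbol{u}\cdot\boldsymbol{v}+\sum_{\mathcal{K}}\int_{\mathcal{Q}_{\mathcal{K}}}(n_t+\boldsymbol{w}\cdot\boldsymbol{n})(\boldsymbol{u}+\lambda(\bar{\boldsymbol{u}}-\boldsymbol{u}))\cdot(\boldsymbol{v}-\bar{\boldsymbol{v}})+\int_{\partial\mathcal{E}^+}(n_t+\bar{\boldsymbol{w}}\cdot\boldsymbol{n})\bar{\boldsymbol{u}}\cdot\bar{\boldsymbol{v}}$, where $\lambda=1$ if $n_t+\boldsymbol{w}\cdot\boldsymbol{n}<0$ and $\lambda=0$ otherwise, and $\partial\mathcal{E}^+$ is the part of $\partial\mathcal{E}^N\cap\partial\mathcal{E}^n$ where $n_t+\bar{\boldsymbol{w}}\cdot\boldsymbol{n}\ge0$. On an interior facet, $\bar{\boldsymbol{u}}_h$ is single-valued while $\boldsymbol{u}_h$ has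 traces from both sides; the jump is $[\![\boldsymbol{u}_h\cdot\boldsymbol{n}]\!]=\boldsymbol{u}_h^l\cdot\boldsymbol{n}^l+\boldsymbol{u}_h^r\cdot\boldsymbol{n}^r$. *)

theory Defs
  imports "HOL-Analysis.Analysis"
begin

text \<open>Space-time points are pairs (t, x) with t :: real and x :: real^'d (spatial dimension
  CARD('d)). Broken (discontinuous) finite element functions are
  represented as families indexed by the cell K (a set of space-time points), facet functions as
  families indexed by the facet S. Each member is a global polynomial; only its restriction to
  K (resp. S) enters the forms.\<close>

type_synonym 'd stpt = "real \<times> (real^'d)"

definition poly_fun :: "nat \<Rightarrow> ('d::finite stpt \<Rightarrow> real) \<Rightarrow> bool" where
  "poly_fun k f \<longleftrightarrow> (\<exists>c :: nat \<Rightarrow> ('d \<Rightarrow> nat) \<Rightarrow> real.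
     \<forall>z. f z = (\<Sum>(j,a)\<in>{(j, a :: 'd \<Rightarrow> nat). j + sum a UNIV \<le> k}.
                  c j a * fst z ^ j * (\<Prod>i\<in>UNIV. (snd z $ i) ^ a i)))"

definition vpoly_fun :: "nat \<Rightarrow> ('d::finite stpt \<Rightarrow> real^'d) \<Rightarrow> bool" where
  "vpoly_fun k u \<longleftrightarrow> (\<forall>i. poly_fun k (\<lambda>z. u z $ i))"

definition pdx :: "'d::finite \<Rightarrow> ('d stpt \<Rightarrow> real) \<Rightarrow> 'd stpt \<Rightarrow> real" where
  "pdx j f z = deriv (\<lambda>s. f (fst z, snd z + s *\<^sub>R axis j 1)) 0"

definition pdt :: "('d::finite stpt \<Rightarrow> real) \<Rightarrow> 'd stpt \<Rightarrow> real" where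
  "pdt f z = deriv (\<lambda>s. f (fst z + s, snd z)) 0"

definition sdiv :: "('d::finite stpt \<Rightarrow> real^'d) \<Rightarrow> 'd stpt \<Rightarrow> real" where
  "sdiv u z = (\<Sum>i\<in>UNIV. pdx i (\<lambda>y. u y $ i) z)"

definition grad_inner :: "('d::finite stpt \<Rightarrow> real^'d) \<Rightarrow> ('d stpt \<Rightarrow> real^'d) \<Rightarrow> 'd stpt \<Rightarrow> real" where
  "grad_inner u v z = (\<Sum>i\<in>UNIV. \<Sum>j\<in>UNIV. pdx j (\<lambda>y. u y $ i) z * pdx j (\<lambda>y. v y $ i) z)"

definition dnormal :: "('d::finite stpt \<Rightarrow> real^'d) \<Rightarrow> real^'d \<Rightarrow> 'd stpt \<Rightarrow> real^'d" where
  "dnormal u n z = (\<chi> i. \<Sum>j\<in>UNIV. pdx j (\<lambda>y. u y $ i) z * n $ j)"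

definition dtime :: "('d::finite stpt \<Rightarrow> real^'d) \<Rightarrow> 'd stpt \<Rightarrow> real^'d" where
  "dtime v z = (\<chi> i. pdt (\<lambda>y. v y $ i) z)"

definition conv_term :: "('d::finite stpt \<Rightarrow> real^'d) \<Rightarrow> ('d stpt \<Rightarrow> real^'d) \<Rightarrow> ('d stpt \<Rightarrow> real^'d) \<Rightarrow> 'd stpt \<Rightarrow> real" where
  "conv_term u w v z = (\<Sum>i\<in>UNIV. \<Sum>j\<in>UNIV. u z $ i * w z $ j * pdx j (\<lambda>y. v y $ i) z)"

definition verts :: "'d::finite stpt set \<Rightarrow> 'd stpt set" where
  "verts K = {x. x extreme_point_of K}"

definition st_simplex :: "'d::finite stpt set \<Rightarrow> bool" where
  "st_simplex K \<longleftrightarrow> (\<exists>V. finite V \<and> card V = CARD('d) + 2 \<and> \<not> affine_dependent V \<and> K = convex hull V)"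

definition facets :: "'d::finite stpt set \<Rightarrow> 'd stpt set set" where
  "facets K = {convex hull (verts K - {v}) | v. v \<in> verts K}"

definition onormal :: "'d::finite stpt set \<Rightarrow> 'd stpt set \<Rightarrow> 'd stpt" where
  "onormal K S = (THE \<nu>. norm \<nu> = 1 \<and> (\<forall>y\<in>K. \<forall>p\<in>S. \<nu> \<bullet> (y - p) \<le> 0))"

definition nt :: "'d::finite stpt set \<Rightarrow> 'd stpt set \<Rightarrow> real" where
  "nt K S = fst (onormal K S)"

definition nx :: "'d::finite stpt set \<Rightarrow> 'd stpt set \<Rightarrow> real^'d" where
  "nx K S = snd (onormal K S)"

text \<open>Surface integral over a flat d-simplex S in R^(d+1) (d-dimensional Hausdorff measure),
  via an affine parametrisation over the reference simplex with Gram determinant factor.\<close>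
definition fint :: "'d::finite stpt set \<Rightarrow> ('d stpt \<Rightarrow> real) \<Rightarrow> real" where
  "fint S f = (let W = verts S;
                   p0 = (SOME p. p \<in> W);
                   e = (SOME e :: 'd \<Rightarrow> 'd stpt. bij_betw e UNIV (W - {p0}));
                   \<phi> = (\<lambda>y :: real^'d. p0 + (\<Sum>i\<in>UNIV. (y $ i) *\<^sub>R (e i - p0)));
                   G = (\<chi> i j. (e i - p0) \<bullet> (e j - p0)) :: real^'d^'d
               in sqrt (det G) *
                  integral {y :: real^'d. (\<forall>i. 0 \<le> y $ i) \<and> (\<Sum>i\<in>UNIV. y $ i) \<le> 1} (\<lambda>y. f (\<phi> y)))"

definition Qfacets :: "'d::finite stpt set \<Rightarrow> 'd stpt set set" where
  "Qfacets K = {S \<in> facets K. \<bar>nt K S\<bar> \<noteq> 1}"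

definition bot_facets :: "'d::finite stpt set \<Rightarrow> 'd stpt set set" where
  "bot_facets K = {S \<in> facets K. nt K S = -1}"

definition top_facets :: "'d::finite stpt set \<Rightarrow> 'd stpt set set" where
  "top_facets K = {S \<in> facets K. nt K S = 1}"

definition cells_of :: "'d::finite stpt set set \<Rightarrow> 'd stpt set \<Rightarrow> 'd stpt set set" where
  "cells_of T S = {K \<in> T. S \<in> facets K}"

definition Fn :: "'d::finite stpt set set \<Rightarrow> 'd stpt set set" where
  "Fn T = (\<Union>K\<in>T. Qfacets K)"

definition FI :: "'d::finite stpt set set \<Rightarrow> 'd stpt set set" where
  "FI T = {S \<in> Fn T. card (cells_of T S) = 2}"

definition FB :: "'d::finite stpt set set \<Rightarrow> 'd stpt set set" where
  "FB T = {S \<in> Fn T. card (cells_of T S) = 1}"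

definition st_mesh :: "'d::finite stpt set set \<Rightarrow> real \<Rightarrow> real \<Rightarrow> bool" where
  "st_mesh T tn tn1 \<longleftrightarrow> finite T \<and> T \<noteq> {} \<and> tn < tn1 \<and>
     (\<forall>K\<in>T. st_simplex K) \<and>
     (\<forall>K\<in>T. \<forall>K'\<in>T. K \<noteq> K' \<longrightarrow> K \<inter> K' = convex hull (verts K \<inter> verts K')) \<and>
     (\<forall>K\<in>T. \<forall>z\<in>K. tn \<le> fst z \<and> fst z \<le> tn1) \<and>
     (\<forall>K\<in>T. \<forall>S\<in>bot_facets K. \<forall>z\<in>S. fst z = tn) \<and>
     (\<forall>K\<in>T. \<forall>S\<in>top_facets K. \<forall>z\<in>S. fst z = tn1)"

definition Vstar :: "nat \<Rightarrow> 'd::finite stpt set set \<Rightarrow> 'd stpt set set \<Rightarrow>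
    ('d stpt set \<Rightarrow> 'd stpt \<Rightarrow> real^'d) \<Rightarrow> ('d stpt set \<Rightarrow> 'd stpt \<Rightarrow> real^'d) \<Rightarrow> bool" where
  "Vstar k T FD v vb \<longleftrightarrow> (\<forall>K\<in>T. vpoly_fun k (v K)) \<and> (\<forall>S\<in>Fn T. vpoly_fun k (vb S)) \<and>
     (\<forall>S\<in>FD. \<forall>z\<in>S. vb S z = 0)"

definition Qstar :: "nat \<Rightarrow> 'd::finite stpt set set \<Rightarrow>
    ('d stpt set \<Rightarrow> 'd stpt \<Rightarrow> real) \<Rightarrow> ('d stpt set \<Rightarrow> 'd stpt \<Rightarrow> real) \<Rightarrow> bool" where
  "Qstar k T q qb \<longleftrightarrow> (\<forall>K\<in>T. poly_fun (k - 1) (q K)) \<and> (\<forall>S\<in>Fn T. poly_fun k (qb S))"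

definition a_form :: "'d::finite stpt set set \<Rightarrow> real \<Rightarrow> real \<Rightarrow>
    ('d stpt set \<Rightarrow> 'd stpt \<Rightarrow> real^'d) \<Rightarrow> ('d stpt set \<Rightarrow> 'd stpt \<Rightarrow> real^'d) \<Rightarrow>
    ('d stpt set \<Rightarrow> 'd stpt \<Rightarrow> real^'d) \<Rightarrow> ('d stpt set \<Rightarrow> 'd stpt \<Rightarrow> real^'d) \<Rightarrow> real" where
  "a_form T nu alpha u ub v vb =
     (\<Sum>K\<in>T. integral K (\<lambda>z. nu * grad_inner (u K) (v K) z))
   + (\<Sum>K\<in>T. \<Sum>S\<in>Qfacets K. fint S (\<lambda>z. nu * alpha / diameter K * ((u K z - ub S z) \<bullet> (v K z - vb S z))))
   - (\<Sum>K\<in>T. \<Sum>S\<in>Qfacets K. fint S (\<lambda>z. nu * ((u K z - ub S z) \<bullet> dnormal (v K) (nx K S) z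
                                                 + dnormal (u K) (nx K S) z \<bullet> (v K z - vb S z))))"

definition b_form :: "'d::finite stpt set set \<Rightarrow>
    ('d stpt set \<Rightarrow> 'd stpt \<Rightarrow> real) \<Rightarrow> ('d stpt set \<Rightarrow> 'd stpt \<Rightarrow> real) \<Rightarrow>
    ('d stpt set \<Rightarrow> 'd stpt \<Rightarrow> real^'d) \<Rightarrow> ('d stpt set \<Rightarrow> 'd stpt \<Rightarrow> real^'d) \<Rightarrow> real" where
  "b_form T p pb v vb =
     - (\<Sum>K\<in>T. integral K (\<lambda>z. p K z * sdiv (v K) z))
   + (\<Sum>K\<in>T. \<Sum>S\<in>Qfacets K. fint S (\<lambda>z. ((v K z - vb S z) \<bullet> nx K S) * pb S z))"

definition upw :: "real \<Rightarrow> real" where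
  "upw \<beta> = (if \<beta> < 0 then 1 else 0)"

definition t_form :: "'d::finite stpt set set \<Rightarrow> 'd stpt set set \<Rightarrow>
    ('d stpt set \<Rightarrow> 'd stpt \<Rightarrow> real^'d) \<Rightarrow> ('d stpt set \<Rightarrow> 'd stpt \<Rightarrow> real^'d) \<Rightarrow>
    ('d stpt set \<Rightarrow> 'd stpt \<Rightarrow> real^'d) \<Rightarrow> ('d stpt set \<Rightarrow> 'd stpt \<Rightarrow> real^'d) \<Rightarrow>
    ('d stpt set \<Rightarrow> 'd stpt \<Rightarrow> real^'d) \<Rightarrow> ('d stpt set \<Rightarrow> 'd stpt \<Rightarrow> real^'d) \<Rightarrow> real" where
  "t_form T FN u ub w wb v vb =
     - (\<Sum>K\<in>T. integral K (\<lambda>z. u K z \<bullet> dtime (v K) z + conv_term (u K) (w K) (v K) z))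
   + (\<Sum>K\<in>T. \<Sum>S\<in>top_facets K. fint S (\<lambda>z. u K z \<bullet> v K z))
   + (\<Sum>K\<in>T. \<Sum>S\<in>Qfacets K. fint S (\<lambda>z.
        (nt K S + w K z \<bullet> nx K S) *
        ((u K z + upw (nt K S + w K z \<bullet> nx K S) *\<^sub>R (ub S z - u K z)) \<bullet> (v K z - vb S z))))
   + (\<Sum>S\<in>FN. \<Sum>K\<in>cells_of T S. fint S (\<lambda>z.
        if nt K S + wb S z \<bullet> nx K S \<ge> 0
        then (nt K S + wb S z \<bullet> nx K S) * (ub S z \<bullet> vb S z) else 0))"

text \<open>right-hand side; the integral over Omega^n is the sum over the bottom facets K^n\<close>
definition rhs_form :: "'d::finite stpt set set \<Rightarrow> 'd stpt set set \<Rightarrow>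
    ('d stpt \<Rightarrow> real^'d) \<Rightarrow> ('d stpt \<Rightarrow> real^'d) \<Rightarrow> ('d stpt \<Rightarrow> real^'d) \<Rightarrow>
    ('d stpt set \<Rightarrow> 'd stpt \<Rightarrow> real^'d) \<Rightarrow> ('d stpt set \<Rightarrow> 'd stpt \<Rightarrow> real^'d) \<Rightarrow> real" where
  "rhs_form T FN f g um v vb =
     (\<Sum>K\<in>T. integral K (\<lambda>z. f z \<bullet> v K z))
   - (\<Sum>S\<in>FN. fint S (\<lambda>z. g z \<bullet> vb S z))
   + (\<Sum>K\<in>T. \<Sum>S\<in>bot_facets K. fint S (\<lambda>z. um z \<bullet> v K z))"

end

theory Submission
  imports Defs
begin

lemma cont_integrable_compact:
  fixes f :: "'a::euclidean_space \<Rightarrow> real"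
  assumes "compact S" "continuous_on S f"
  shows "f integrable_on S"
proof -
  have "integrable lborel (\<lambda>x. indicator S x *\<^sub>R f x)"
    by (rule borel_integrable_compact[OF assms])
  then have "(\<lambda>x. indicator S x *\<^sub>R f x) integrable_on UNIV"
    by (rule integrable_on_lborel)
  then have "(\<lambda>x. if x \<in> S then f x else 0) integrable_on UNIV"
    by (rule integrable_eq) (auto simp: indicator_def)
  then show ?thesis using integrable_restrict_UNIV by blast
qed

lemma integral_zero_imp_zero:
  fixes g :: "'a::euclidean_space \<Rightarrow> real"
  assumes S: "compact S" "convex S" "interior S \<noteq> {}"
    and g: "continuous_on S g" "\<And>x. x \<in> S \<Longrightarrow> 0 \<le> g x"
    and z: "integral S g = 0"
  shows "\<forall>x\<in>S. g x = 0"
proof -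
  have intS: "g integrable_on S" using cont_integrable_compact S g by blast
  have inner: "g x = 0" if x: "x \<in> interior S" for x
  proof -
    obtain a b where ab: "cbox a b \<subseteq> interior S" "x \<in> box a b"
      by (rule open_contains_cbox[OF open_interior x])
    have sub: "cbox a b \<subseteq> S" using ab interior_subset by blast
    have cc: "continuous_on (cbox a b) g" using continuous_on_subset[OF g(1) sub] .
    have ic: "g integrable_on cbox a b" using integrable_continuous[OF cc] .
    have le: "integral (cbox a b) g \<le> integral S g"
      by (rule integral_subset_le[OF sub ic intS]) (use g in auto)
    have ge: "0 \<le> integral (cbox a b) g"
      by (rule integral_nonneg[OF ic]) (use g sub in auto)
    have "integral (cbox a b) g = 0" using le ge z by linarith
    then have hi: "(g has_integral 0) (cbox a b)" using integrable_integral[OF ic] by simp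
    have bx: "box a b \<subseteq> S" using box_subset_cbox sub by blast
    show ?thesis
      by (rule has_integral_0_cbox_imp_0[OF cc _ hi]) (use ab bx g in auto, meson ab(2) box_subset_cbox subsetD)
  qed
  have cl: "closed {x\<in>S. g x = 0}"
    by (rule continuous_closed_preimage_constant[OF g(1)]) (use S compact_imp_closed in auto)
  have "interior S \<subseteq> {x\<in>S. g x = 0}" using inner interior_subset by blast
  then have "closure (interior S) \<subseteq> {x\<in>S. g x = 0}" by (rule closure_minimal[OF _ cl])
  moreover have "closure (interior S) = S"
    using convex_closure_interior[OF S(2,3)] closure_closed[OF compact_imp_closed[OF S(1)]] by simp
  ultimately show ?thesis by blast
qed

definition monom :: "nat \<Rightarrow> ('d::finite \<Rightarrow> nat) \<Rightarrow> 'd stpt \<Rightarrow> real" where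
  "monom j a z = fst z ^ j * (\<Prod>i\<in>UNIV. (snd z $ i) ^ a i)"

definition Ideg :: "nat \<Rightarrow> (nat \<times> ('d::finite \<Rightarrow> nat)) set" where
  "Ideg k = {(j, a). j + sum a UNIV \<le> k}"

lemma finite_Ideg: "finite (Ideg k :: (nat \<times> ('d::finite \<Rightarrow> nat)) set)"
proof -
  have "Ideg k \<subseteq> {..k} \<times> (Pi\<^sub>E (UNIV::'d set) (\<lambda>_. {..k}))"
  proof
    fix x assume "x \<in> (Ideg k :: (nat \<times> ('d \<Rightarrow> nat)) set)"
    then obtain j a where x: "x = (j, a)" "j + sum a UNIV \<le> k" by (auto simp: Ideg_def)
    have "a i \<le> k" for i using member_le_sum[of i UNIV a] x(2) by simp
    then show "x \<in> {..k} \<times> (Pi\<^sub>E (UNIV::'d set) (\<lambda>_. {..k}))" using x by auto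
  qed
  moreover have "finite ({..k} \<times> (Pi\<^sub>E (UNIV::'d set) (\<lambda>_. {..k})))"
    by (intro finite_cartesian_product finite_PiE) auto
  ultimately show ?thesis by (rule finite_subset)
qed

lemma poly_fun_alt: "poly_fun k f \<longleftrightarrow> (\<exists>c. \<forall>z. f z = (\<Sum>(j,a)\<in>Ideg k. c j a * monom j a z))"
  unfolding poly_fun_def Ideg_def monom_def by (simp add: mult.assoc)

lemma poly_fun_gen:
  fixes d :: "'x \<Rightarrow> real" and J :: "'x \<Rightarrow> nat" and Aa :: "'x \<Rightarrow> ('d::finite \<Rightarrow> nat)"
  assumes A: "finite A" and deg: "\<And>x. x \<in> A \<Longrightarrow> d x \<noteq> 0 \<Longrightarrow> J x + sum (Aa x) UNIV \<le> k"
    and f: "\<And>z. f z = (\<Sum>x\<in>A. d x * monom (J x) (Aa x) z)"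
  shows "poly_fun k f"
proof -
  define A' where "A' = {x\<in>A. d x \<noteq> 0}"
  have A': "finite A'" using A by (simp add: A'_def)
  define c where "c j a = (\<Sum>x\<in>{x\<in>A'. (J x, Aa x) = (j, a)}. d x)" for j a
  have "f z = (\<Sum>(j,a)\<in>Ideg k. c j a * monom j a z)" for z
  proof -
    have "(\<Sum>(j,a)\<in>Ideg k. c j a * monom j a z)
        = (\<Sum>y\<in>Ideg k. \<Sum>x\<in>{x\<in>A'. (J x, Aa x) = y}. d x * monom (J x) (Aa x) z)"
      unfolding c_def by (rule sum.cong) (auto simp: sum_distrib_right)
    also have "\<dots> = (\<Sum>x\<in>A'. d x * monom (J x) (Aa x) z)"
      by (rule sum.group[OF A' finite_Ideg]) (use deg in \<open>auto simp: A'_def Ideg_def\<close>)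
    also have "\<dots> = (\<Sum>x\<in>A. d x * monom (J x) (Aa x) z)"
      by (rule sum.mono_neutral_left[OF A]) (auto simp: A'_def)
    finally show ?thesis using f by simp
  qed
  then show ?thesis unfolding poly_fun_alt by blast
qed

lemma poly_fun_zero: "poly_fun k (\<lambda>z. 0)"
  unfolding poly_fun_alt by (rule exI[of _ "\<lambda>_ _. 0"]) simp

lemma poly_fun_add:
  assumes "poly_fun k f" "poly_fun k g" shows "poly_fun k (\<lambda>z. f z + g z)"
proof -
  obtain c where c: "\<And>z. f z = (\<Sum>(j,a)\<in>Ideg k. c j a * monom j a z)" using assms(1) poly_fun_alt by blast
  obtain c' where c': "\<And>z. g z = (\<Sum>(j,a)\<in>Ideg k. c' j a * monom j a z)" using assms(2) poly_fun_alt by blast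
  have "f z + g z = (\<Sum>(j,a)\<in>Ideg k. (c j a + c' j a) * monom j a z)" for z
    unfolding c c' by (simp add: sum.distrib[symmetric] case_prod_beta distrib_right)
  then show ?thesis unfolding poly_fun_alt by (intro exI[of _ "\<lambda>j a. c j a + c' j a"]) simp
qed

lemma poly_fun_scale:
  assumes "poly_fun k f" shows "poly_fun k (\<lambda>z. r * f z)"
proof -
  obtain c where c: "\<And>z. f z = (\<Sum>(j,a)\<in>Ideg k. c j a * monom j a z)" using assms(1) poly_fun_alt by blast
  have "r * f z = (\<Sum>(j,a)\<in>Ideg k. (r * c j a) * monom j a z)" for z
    unfolding c by (simp add: sum_distrib_left case_prod_beta mult.assoc)
  then show ?thesis unfolding poly_fun_alt by (intro exI[of _ "\<lambda>j a. r * c j a"]) simp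
qed

lemma poly_fun_sum:
  assumes "finite I" "\<And>i. i \<in> I \<Longrightarrow> poly_fun k (F i)" shows "poly_fun k (\<lambda>z. \<Sum>i\<in>I. F i z)"
  using assms
proof (induction I rule: finite_induct)
  case empty then show ?case by (simp add: poly_fun_zero)
next
  case (insert x F) then show ?case by (simp add: poly_fun_add)
qed

lemma poly_fun_inner:
  assumes "vpoly_fun k u" shows "poly_fun k (\<lambda>z. u z \<bullet> n)"
proof -
  have "poly_fun k (\<lambda>z. \<Sum>i\<in>UNIV. n $ i * u z $ i)"
    by (rule poly_fun_sum) (use assms in \<open>auto simp: vpoly_fun_def intro!: poly_fun_scale\<close>)
  then show ?thesis by (simp add: inner_vec_def mult.commute)
qed

lemma vpoly_fun_diff:
  assumes "vpoly_fun k u" "vpoly_fun k v" shows "vpoly_fun k (\<lambda>z. u z - v z)"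
proof -
  have "poly_fun k (\<lambda>z. u z $ i + (-1) * v z $ i)" for i
    using assms unfolding vpoly_fun_def by (intro poly_fun_add poly_fun_scale) auto
  then show ?thesis by (simp add: vpoly_fun_def)
qed

lemma poly_fun_continuous:
  assumes "poly_fun k f" shows "continuous_on UNIV f"
proof -
  obtain c where c: "\<And>z. f z = (\<Sum>(j,a)\<in>Ideg k. c j a * monom j a z)" using assms(1) poly_fun_alt by blast
  have "f = (\<lambda>z. \<Sum>(j,a)\<in>Ideg k. c j a * monom j a z)" using c by auto
  moreover have "continuous_on UNIV (\<lambda>z. \<Sum>(j,a)\<in>Ideg k. c j a * monom j a z)"
    unfolding monom_def case_prod_beta by (intro continuous_intros)
  ultimately show ?thesis by simp
qed

lemma monom_deriv:
  "((\<lambda>s. monom j a (fst z, snd z + s *\<^sub>R axis m 1)) has_field_derivative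
     real (a m) * monom j (a(m := a m - 1)) z) (at 0)"
proof -
  have split: "(\<Prod>i\<in>UNIV. ((x + s *\<^sub>R axis m 1) $ i) ^ a i)
      = (x $ m + s) ^ a m * (\<Prod>i\<in>UNIV - {m}. (x $ i) ^ a i)" for s and x :: "real^'a"
  proof -
    fix t :: real
    have "(\<Prod>i\<in>UNIV. (snd (t, x + s *\<^sub>R axis m 1) $ i) ^ a i)
        = (snd (t, x + s *\<^sub>R axis m 1) $ m) ^ a m * (\<Prod>i\<in>UNIV - {m}. (snd (t, x + s *\<^sub>R axis m 1) $ i) ^ a i)"
      by (rule prod.remove) auto
    also have "(\<Prod>i\<in>UNIV - {m}. (snd (t, x + s *\<^sub>R axis m 1) $ i) ^ a i) = (\<Prod>i\<in>UNIV - {m}. (x $ i) ^ a i)"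
      by (rule prod.cong) (auto simp: axis_def)
    finally show ?thesis by (simp add: axis_def)
  qed
  have split2: "monom j (a(m := a m - 1)) z = fst z ^ j * ((snd z $ m) ^ (a m - 1) * (\<Prod>i\<in>UNIV - {m}. (snd z $ i) ^ a i))"
  proof -
    have "(\<Prod>i\<in>UNIV. (snd z $ i) ^ (a(m := a m - 1)) i) = (snd z $ m) ^ (a m - 1) * (\<Prod>i\<in>UNIV - {m}. (snd z $ i) ^ (a(m := a m - 1)) i)"
      by (subst prod.remove[of _ m]) auto
    also have "(\<Prod>i\<in>UNIV - {m}. (snd z $ i) ^ (a(m := a m - 1)) i) = (\<Prod>i\<in>UNIV - {m}. (snd z $ i) ^ a i)"
      by (rule prod.cong) auto
    finally show ?thesis by (simp add: monom_def)
  qed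
  obtain t x where z: "z = (t, x)" by force
  have "((\<lambda>s. t ^ j * ((x $ m + s) ^ a m * (\<Prod>i\<in>UNIV - {m}. (x $ i) ^ a i))) has_field_derivative
      t ^ j * ((real (a m) * (x $ m + 0) ^ (a m - 1) * 1) * (\<Prod>i\<in>UNIV - {m}. (x $ i) ^ a i))) (at 0)"
    by (auto intro!: derivative_eq_intros)
  then show ?thesis unfolding split2 unfolding z monom_def fst_conv snd_conv split
    by (simp add: mult_ac)
qed

lemma sum_upd_minus:
  fixes a :: "'d::finite \<Rightarrow> nat"
  assumes "a m \<noteq> 0"
  shows "sum (a(m := a m - 1)) UNIV + 1 = sum a UNIV"
proof -
  have "sum (a(m := a m - 1)) UNIV = (a m - 1) + sum (a(m := a m - 1)) (UNIV - {m})"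
    by (subst sum.remove[of _ m]) auto
  also have "sum (a(m := a m - 1)) (UNIV - {m}) = sum a (UNIV - {m})"
    by (rule sum.cong) auto
  also have "sum a UNIV = a m + sum a (UNIV - {m})"
    by (subst sum.remove[of _ m]) auto
  ultimately show ?thesis using assms by simp
qed

lemma poly_fun_pdx:
  assumes "poly_fun k f" shows "poly_fun (k - 1) (pdx m f)"
proof -
  obtain c where c: "\<And>z. f z = (\<Sum>(j,a)\<in>Ideg k. c j a * monom j a z)" using assms(1) poly_fun_alt by blast
  have "pdx m f z = (\<Sum>x\<in>Ideg k. (c (fst x) (snd x) * real (snd x m)) * monom (fst x) ((snd x)(m := snd x m - 1)) z)" for z
  proof -
    have "((\<lambda>s. \<Sum>x\<in>Ideg k. c (fst x) (snd x) * monom (fst x) (snd x) (fst z, snd z + s *\<^sub>R axis m 1)) has_field_derivative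
        (\<Sum>x\<in>Ideg k. c (fst x) (snd x) * (real (snd x m) * monom (fst x) ((snd x)(m := snd x m - 1)) z))) (at 0)"
      by (intro DERIV_sum DERIV_cmult monom_deriv)
    then have "deriv (\<lambda>s. \<Sum>x\<in>Ideg k. c (fst x) (snd x) * monom (fst x) (snd x) (fst z, snd z + s *\<^sub>R axis m 1)) 0
        = (\<Sum>x\<in>Ideg k. c (fst x) (snd x) * (real (snd x m) * monom (fst x) ((snd x)(m := snd x m - 1)) z))"
      by (rule DERIV_imp_deriv)
    then show ?thesis unfolding pdx_def c by (simp add: case_prod_beta mult.assoc)
  qed
  then show ?thesis
  proof (intro poly_fun_gen[OF finite_Ideg])
    fix x assume "x \<in> Ideg k" "c (fst x) (snd x) * real (snd x m) \<noteq> 0"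
    then show "fst x + sum ((snd x)(m := snd x m - 1)) UNIV \<le> k - 1"
      using sum_upd_minus[of "snd x" m] by (auto simp: Ideg_def)
  qed
qed

lemma poly_fun_sdiv:
  assumes "vpoly_fun k u" shows "poly_fun (k - 1) (sdiv u)"
proof -
  have "poly_fun (k - 1) (\<lambda>z. \<Sum>i\<in>UNIV. pdx i (\<lambda>y. u y $ i) z)"
    by (rule poly_fun_sum) (use assms poly_fun_pdx in \<open>auto simp: vpoly_fun_def\<close>)
  then show ?thesis unfolding sdiv_def[abs_def] .
qed

lemma pdx_zero[simp]: "pdx j (\<lambda>y. 0) z = 0"
  unfolding pdx_def by (simp add: DERIV_imp_deriv[OF DERIV_const])

lemma pdt_zero[simp]: "pdt (\<lambda>y. 0) z = 0"
  unfolding pdt_def by (simp add: DERIV_imp_deriv[OF DERIV_const])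

lemma verts_hull:
  assumes "\<not> affine_dependent V" shows "verts (convex hull V) = V"
  unfolding verts_def using extreme_point_of_convex_hull_affine_independent[OF assms] by auto

lemma simplex_obtain:
  assumes "st_simplex (K :: 'd::finite stpt set)"
  obtains V where "finite V" "card V = CARD('d) + 2" "\<not> affine_dependent V" "K = convex hull V" "verts K = V"
  using assms verts_hull unfolding st_simplex_def by blast

lemma full_affine_hull:
  fixes V :: "'d::finite stpt set"
  assumes "finite V" "card V = CARD('d) + 2" "\<not> affine_dependent V"
  shows "affine hull V = UNIV"
proof -
  have "of_nat (card V) = aff_dim V + 1" by (rule aff_dim_affine_independent[OF assms(3)])
  then have "aff_dim V = int (DIM('d stpt))" using assms(2) by simp
  then show ?thesis using aff_dim_eq_full by blast
qed

lemma simplex_interior: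
  assumes "st_simplex (K :: 'd::finite stpt set)"
  shows "compact K" "convex K" "interior K \<noteq> {}"
proof -
  obtain V where V: "finite V" "card V = CARD('d) + 2" "\<not> affine_dependent V" "K = convex hull V"
    using simplex_obtain[OF assms] by blast
  show "compact K" using V by (simp add: compact_convex_hull finite_imp_compact)
  show "convex K" using V by simp
  have "affine hull K = UNIV" using full_affine_hull[OF V(1-3)] V(4) by (simp add: affine_hull_convex_hull)
  then have "rel_interior K = interior K" by (rule rel_interior_interior)
  moreover have "K \<noteq> {}" using V by auto
  ultimately show "interior K \<noteq> {}" using rel_interior_eq_empty[of K] V(4) by auto
qed

lemma perp_zero:
  fixes V :: "'d::finite stpt set"
  assumes "finite V" "card V = CARD('d) + 2" "\<not> affine_dependent V" "w0 \<in> V"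
    and perp: "\<And>x. x \<in> V \<Longrightarrow> \<mu> \<bullet> (x - w0) = 0"
  shows "\<mu> = 0"
proof -
  have "V \<subseteq> {y. \<mu> \<bullet> y = \<mu> \<bullet> w0}" using perp by (auto simp: inner_diff_right)
  then have "affine hull V \<subseteq> {y. \<mu> \<bullet> y = \<mu> \<bullet> w0}" by (rule hull_minimal) (rule affine_hyperplane)
  then have "w0 + \<mu> \<in> {y. \<mu> \<bullet> y = \<mu> \<bullet> w0}" using full_affine_hull[OF assms(1-3)] by auto
  then have "\<mu> \<bullet> \<mu> = 0" by (simp add: inner_add_right)
  then show ?thesis by simp
qed

definition nprop :: "'d::finite stpt set \<Rightarrow> 'd stpt set \<Rightarrow> 'd stpt \<Rightarrow> bool" where
  "nprop K S \<nu> \<longleftrightarrow> norm \<nu> = 1 \<and> (\<forall>y\<in>K. \<forall>p\<in>S. \<nu> \<bullet> (y - p) \<le> 0)"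

lemma hull_halfspace:
  fixes V :: "'a::real_inner set"
  assumes "\<And>x. x \<in> V \<Longrightarrow> \<mu> \<bullet> (x - w0) \<le> 0" "y \<in> convex hull V"
  shows "\<mu> \<bullet> (y - w0) \<le> 0"
proof -
  have "V \<subseteq> {y. \<mu> \<bullet> y \<le> \<mu> \<bullet> w0}" using assms(1) by (auto simp: inner_diff_right)
  then have "convex hull V \<subseteq> {y. \<mu> \<bullet> y \<le> \<mu> \<bullet> w0}" by (rule hull_minimal) (rule convex_halfspace_le)
  then show ?thesis using assms(2) by (auto simp: inner_diff_right)
qed

lemma hull_hyperplane:
  fixes V :: "'a::real_inner set"
  assumes "\<And>x. x \<in> V \<Longrightarrow> \<mu> \<bullet> (x - w0) = 0" "y \<in> convex hull V"
  shows "\<mu> \<bullet> (y - w0) = 0"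
proof -
  have "V \<subseteq> {y. \<mu> \<bullet> y = \<mu> \<bullet> w0}" using assms(1) by (auto simp: inner_diff_right)
  then have "convex hull V \<subseteq> {y. \<mu> \<bullet> y = \<mu> \<bullet> w0}" by (rule hull_minimal) (rule convex_hyperplane)
  then show ?thesis using assms(2) by (auto simp: inner_diff_right)
qed

lemma nprop_facts:
  fixes V :: "'d::finite stpt set"
  assumes V: "finite V" "card V = CARD('d) + 2" "\<not> affine_dependent V"
    and v: "v \<in> V" and w0: "w0 \<in> V - {v}"
    and P: "nprop (convex hull V) (convex hull (V - {v})) \<nu>"
  shows "\<And>p. p \<in> convex hull (V - {v}) \<Longrightarrow> \<nu> \<bullet> (p - w0) = 0" "\<nu> \<bullet> (v - w0) < 0"
proof -
  have sub: "convex hull (V - {v}) \<subseteq> convex hull V" by (rule hull_mono) auto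
  have w0S: "w0 \<in> convex hull (V - {v})" by (rule hull_inc[OF w0])
  have pw: "\<nu> \<bullet> (p - w0) = 0" if "p \<in> convex hull (V - {v})" for p
  proof -
    have pK: "p \<in> convex hull V" using sub that by blast
    have w0K: "w0 \<in> convex hull V" using sub w0S by blast
    have "\<nu> \<bullet> (p - w0) \<le> 0" using P pK w0S unfolding nprop_def by blast
    moreover have "\<nu> \<bullet> (w0 - p) \<le> 0" using P that w0K unfolding nprop_def by blast
    ultimately show ?thesis by (simp add: inner_diff_right)
  qed
  then show "\<And>p. p \<in> convex hull (V - {v}) \<Longrightarrow> \<nu> \<bullet> (p - w0) = 0" by blast
  have vK: "v \<in> convex hull V" by (rule hull_inc[OF v])
  have "\<nu> \<bullet> (v - w0) \<le> 0" using P vK w0S unfolding nprop_def by blast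
  moreover have "\<nu> \<bullet> (v - w0) \<noteq> 0"
  proof
    assume "\<nu> \<bullet> (v - w0) = 0"
    assume z: "\<nu> \<bullet> (v - w0) = 0"
    have "\<nu> = 0"
    proof (rule perp_zero[OF V])
      show "w0 \<in> V" using w0 by simp
      fix x assume x: "x \<in> V"
      show "\<nu> \<bullet> (x - w0) = 0"
      proof (cases "x = v")
        case True then show ?thesis using z by simp
      next
        case False then have "x \<in> V - {v}" using x by blast
        then have "x \<in> convex hull (V - {v})" by (rule hull_inc)
        then show ?thesis using pw by blast
      qed
    qed
    then show False using P by (simp add: nprop_def)
  qed
  ultimately show "\<nu> \<bullet> (v - w0) < 0" by simp
qed

lemma nprop_unique:
  fixes V :: "'d::finite stpt set"
  assumes V: "finite V" "card V = CARD('d) + 2" "\<not> affine_dependent V"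
    and v: "v \<in> V" and w0: "w0 \<in> V - {v}"
    and P1: "nprop (convex hull V) (convex hull (V - {v})) \<nu>"
    and P2: "nprop (convex hull V) (convex hull (V - {v})) \<mu>"
  shows "\<mu> = \<nu>"
proof -
  note f1 = nprop_facts[OF V v w0 P1] and f2 = nprop_facts[OF V v w0 P2]
  define c where "c = (\<mu> \<bullet> (v - w0)) / (\<nu> \<bullet> (v - w0))"
  have c: "c > 0" using f1(2) f2(2) by (simp add: c_def divide_neg_neg)
  have "\<mu> - c *\<^sub>R \<nu> = 0"
  proof (rule perp_zero[OF V, of w0])
    show "w0 \<in> V" using w0 by simp
    fix x assume x: "x \<in> V"
    show "(\<mu> - c *\<^sub>R \<nu>) \<bullet> (x - w0) = 0"
    proof (cases "x = v")
      case True
      have "c * (\<nu> \<bullet> (v - w0)) = \<mu> \<bullet> (v - w0)" using f1(2) unfolding c_def by simp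
      then show ?thesis using True by (simp add: inner_diff_left)
    next
      case False then have "x \<in> V - {v}" using x by blast
        then have "x \<in> convex hull (V - {v})" by (rule hull_inc)
      then have "\<mu> \<bullet> (x - w0) = 0" "\<nu> \<bullet> (x - w0) = 0" using f1(1) f2(1) by blast+
      then show ?thesis by (simp add: inner_diff_left)
    qed
  qed
  then have mu: "\<mu> = c *\<^sub>R \<nu>" by simp
  then have "norm \<mu> = c" using P1 c by (simp add: nprop_def)
  then have "c = 1" using P2 by (simp add: nprop_def)
  then show ?thesis using mu by simp
qed

lemma nprop_exists:
  fixes V :: "'d::finite stpt set"
  assumes V: "finite V" "card V = CARD('d) + 2" "\<not> affine_dependent V"
    and v: "v \<in> V" and w0: "w0 \<in> V - {v}"
  shows "\<exists>\<nu>. nprop (convex hull V) (convex hull (V - {v})) \<nu>"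
proof -
  define X where "X = (\<lambda>x. x - w0) ` (V - {v, w0})"
  have "card X \<le> card (V - {v, w0})" unfolding X_def by (rule card_image_le) (use V in simp)
  also have "card (V - {v, w0}) = CARD('d)"
  proof -
    have "card {v, w0} = 2" using w0 by auto
    moreover have "{v, w0} \<subseteq> V" using v w0 by auto
    ultimately show ?thesis using V by (simp add: card_Diff_subset)
  qed
  finally have "dim X < DIM('d stpt)"
    using dim_le_card[of X X] V unfolding X_def by (simp add: span_superset)
  then obtain n0 where n0: "n0 \<noteq> 0" "\<And>y. y \<in> span X \<Longrightarrow> orthogonal n0 y"
    using orthogonal_to_subspace_exists by blast
  have perpW: "n0 \<bullet> (x - w0) = 0" if "x \<in> V - {v}" for x
  proof (cases "x = w0")
    case False then have "x - w0 \<in> span X" using that unfolding X_def by (intro span_base) auto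
    then show ?thesis using n0 orthogonal_def by blast
  qed simp
  define s where "s = n0 \<bullet> (v - w0)"
  have s: "s \<noteq> 0"
  proof
    assume "s = 0"
    then have z: "n0 \<bullet> (v - w0) = 0" by (simp add: s_def)
    have "n0 = 0"
    proof (rule perp_zero[OF V])
      show "w0 \<in> V" using w0 by simp
      fix x assume x: "x \<in> V"
      show "n0 \<bullet> (x - w0) = 0"
      proof (cases "x = v")
        case True then show ?thesis using z by simp
      next
        case False then show ?thesis using x perpW by blast
      qed
    qed
    then show False using n0 by simp
  qed
  define \<nu> where "\<nu> = (- sgn s / norm n0) *\<^sub>R n0"
  have nn: "norm \<nu> = 1" using n0 s by (simp add: \<nu>_def abs_sgn_eq)
  have nv: "\<nu> \<bullet> (v - w0) < 0"
    using n0 s by (simp add: \<nu>_def s_def[symmetric] divide_simps sgn_if split: if_splits)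
  have nW: "\<nu> \<bullet> (x - w0) = 0" if "x \<in> V - {v}" for x using perpW[OF that] by (simp add: \<nu>_def)
  have "\<nu> \<bullet> (y - p) \<le> 0" if y: "y \<in> convex hull V" and p: "p \<in> convex hull (V - {v})" for y p
  proof -
    have "\<nu> \<bullet> (y - w0) \<le> 0"
    proof (rule hull_halfspace[OF _ y])
      fix x assume x: "x \<in> V"
      show "\<nu> \<bullet> (x - w0) \<le> 0"
      proof (cases "x = v")
        case True then show ?thesis using nv by simp
      next
        case False then show ?thesis using x nW by simp
      qed
    qed
    moreover have "\<nu> \<bullet> (p - w0) = 0" by (rule hull_hyperplane[OF _ p]) (use nW in auto)
    ultimately show ?thesis by (simp add: inner_diff_right)
  qed
  then show ?thesis using nn unfolding nprop_def by blast
qed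

lemma onormal_char:
  fixes V :: "'d::finite stpt set"
  assumes V: "finite V" "card V = CARD('d) + 2" "\<not> affine_dependent V"
    and v: "v \<in> V" and w0: "w0 \<in> V - {v}"
  shows "nprop (convex hull V) (convex hull (V - {v})) (onormal (convex hull V) (convex hull (V - {v})))"
    and "\<And>\<mu>. nprop (convex hull V) (convex hull (V - {v})) \<mu> \<Longrightarrow> \<mu> = onormal (convex hull V) (convex hull (V - {v}))"
proof -
  obtain \<nu> where P: "nprop (convex hull V) (convex hull (V - {v})) \<nu>" using nprop_exists[OF assms] by blast
  have eq: "onormal (convex hull V) (convex hull (V - {v})) = \<nu>"
  proof -
    have "onormal (convex hull V) (convex hull (V - {v})) = (THE \<nu>. nprop (convex hull V) (convex hull (V - {v})) \<nu>)"
      unfolding onormal_def nprop_def ..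
    also have "\<dots> = \<nu>"
      by (rule the_equality[where P="nprop (convex hull V) (convex hull (V - {v}))", OF P]) (rule nprop_unique[OF assms P])
    finally show ?thesis .
  qed
  show "nprop (convex hull V) (convex hull (V - {v})) (onormal (convex hull V) (convex hull (V - {v})))"
    using eq P by simp
  show "\<And>\<mu>. nprop (convex hull V) (convex hull (V - {v})) \<mu> \<Longrightarrow> \<mu> = onormal (convex hull V) (convex hull (V - {v}))"
    using eq nprop_unique[OF assms P] by simp
qed

definition refS :: "(real^'d::finite) set" where
  "refS = {y :: real^'d. (\<forall>i. 0 \<le> y $ i) \<and> (\<Sum>i\<in>UNIV. y $ i) \<le> 1}"

definition fp0 :: "'d::finite stpt set \<Rightarrow> 'd stpt" where "fp0 S = (SOME p. p \<in> verts S)"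
definition fe :: "'d::finite stpt set \<Rightarrow> 'd \<Rightarrow> 'd stpt" where
  "fe S = (SOME e :: 'd \<Rightarrow> 'd stpt. bij_betw e UNIV (verts S - {fp0 S}))"
definition fphi :: "'d::finite stpt set \<Rightarrow> real^'d \<Rightarrow> 'd stpt" where
  "fphi S y = fp0 S + (\<Sum>i\<in>UNIV. (y $ i) *\<^sub>R (fe S i - fp0 S))"
definition fG :: "'d::finite stpt set \<Rightarrow> real^'d^'d" where
  "fG S = (\<chi> i j. (fe S i - fp0 S) \<bullet> (fe S j - fp0 S))"

lemma fint_alt: "fint S f = sqrt (det (fG S)) * integral refS (\<lambda>y. f (fphi S y))"
  unfolding fint_def Let_def fG_def fphi_def fe_def fp0_def refS_def ..

lemma fint_zero[simp]: "fint S (\<lambda>z. 0) = 0"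
  unfolding fint_alt by simp

lemma refS_compact: "compact (refS :: (real^'d::finite) set)"
proof -
  have "closed (refS :: (real^'d) set)"
    unfolding refS_def
    by (intro closed_Collect_conj closed_Collect_all closed_Collect_le continuous_intros)
  moreover have "bounded (refS :: (real^'d) set)"
  proof -
    have "refS \<subseteq> cbox (0::real^'d) (\<chi> i. 1)"
    proof
      fix y :: "real^'d" assume y: "y \<in> refS"
      have "y $ i \<le> 1" for i
        using member_le_sum[of i UNIV "\<lambda>i. y $ i"] y by (auto simp: refS_def)
      then show "y \<in> cbox 0 (\<chi> i. 1)" using y by (auto simp: refS_def mem_box_cart)
    qed
    then show ?thesis using bounded_cbox bounded_subset by blast
  qed
  ultimately show ?thesis by (simp add: compact_eq_bounded_closed)
qed

lemma refS_convex: "convex (refS :: (real^'d::finite) set)"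
  unfolding convex_def refS_def
  by (auto simp: sum.distrib sum_distrib_left[symmetric] intro!: add_nonneg_nonneg mult_nonneg_nonneg)
     (smt (verit, ccfv_SIG) mult_left_le mult_right_mono)

lemma refS_interior: "interior (refS :: (real^'d::finite) set) \<noteq> {}"
proof -
  define n where "n = real CARD('d)"
  have n: "n \<ge> 1" unfolding n_def by simp
  define r where "r = 1 / (2 * n)"
  have r: "r > 0" using n by (simp add: r_def)
  define y0 :: "real^'d" where "y0 = (\<chi> i. r)"
  have "ball y0 r \<subseteq> refS"
  proof
    fix y assume "y \<in> ball y0 r"
    then have d: "norm (y - y0) < r" by (simp add: dist_norm norm_minus_commute)
    have c: "\<bar>y $ i - r\<bar> < r" for i
      using component_le_norm_cart[of "y - y0" i] d by (simp add: y0_def)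
    then have "0 \<le> y $ i" for i by (smt (verit))
    moreover have "(\<Sum>i\<in>UNIV. y $ i) \<le> (\<Sum>i\<in>(UNIV::'d set). 2 * r)"
      by (rule sum_mono) (use c in \<open>smt (verit)\<close>)
    moreover have "(\<Sum>i\<in>(UNIV::'d set). 2 * r) = 1" using n by (simp add: r_def n_def)
    ultimately show "y \<in> refS" by (simp add: refS_def)
  qed
  then have "y0 \<in> interior refS" using r unfolding mem_interior by blast
  then show ?thesis by blast
qed

lemma fphi_cont: "continuous_on A (fphi S)"
  unfolding fphi_def[abs_def] by (intro continuous_intros)

lemma fint_integrable:
  fixes f :: "'d::finite stpt \<Rightarrow> real"
  assumes "continuous_on UNIV f" shows "(\<lambda>y. f (fphi S y)) integrable_on refS"
proof -
  have "continuous_on refS (\<lambda>y. f (fphi S y))"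
    by (rule continuous_on_compose2[OF assms fphi_cont[of _ S]]) auto
  then show ?thesis by (rule cont_integrable_compact[OF refS_compact])
qed

lemma fint_add:
  fixes f g :: "'d::finite stpt \<Rightarrow> real"
  assumes "continuous_on UNIV f" "continuous_on UNIV g"
  shows "fint S f + fint S g = fint S (\<lambda>z. f z + g z)"
  unfolding fint_alt
  using integral_add[OF fint_integrable[OF assms(1)] fint_integrable[OF assms(2)], of S]
  by (simp add: distrib_left)

lemma gram_det_nz:
  fixes e :: "'d::finite \<Rightarrow> 'a::real_inner"
  assumes indep: "\<And>x :: real^'d. (\<Sum>i\<in>UNIV. (x $ i) *\<^sub>R e i) = 0 \<Longrightarrow> x = 0"
  shows "det (\<chi> i j. e i \<bullet> e j) \<noteq> 0"
proof -
  define G :: "real^'d^'d" where "G = (\<chi> i j. e i \<bullet> e j)"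
  have zero: "x = 0" if "G *v x = 0" for x
  proof -
    have l: "x \<bullet> (G *v x) = (\<Sum>i\<in>UNIV. \<Sum>j\<in>UNIV. x $ i * x $ j * (e i \<bullet> e j))"
      by (simp add: G_def matrix_vector_mult_def inner_vec_def sum_distrib_left mult_ac)
    have "(\<Sum>i\<in>UNIV. (x $ i) *\<^sub>R e i) \<bullet> (\<Sum>j\<in>UNIV. (x $ j) *\<^sub>R e j) = (\<Sum>j\<in>UNIV. \<Sum>n\<in>UNIV. x $ j * (x $ n * (e n \<bullet> e j)))"
      by (simp add: inner_sum_left inner_sum_right sum_distrib_left mult_ac)
    also have "\<dots> = (\<Sum>n\<in>UNIV. \<Sum>j\<in>UNIV. x $ j * (x $ n * (e n \<bullet> e j)))" by (rule sum.swap)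
    also have "\<dots> = (\<Sum>i\<in>UNIV. \<Sum>j\<in>UNIV. x $ i * x $ j * (e i \<bullet> e j))" by (simp add: mult_ac)
    finally have r: "(\<Sum>i\<in>UNIV. (x $ i) *\<^sub>R e i) \<bullet> (\<Sum>j\<in>UNIV. (x $ j) *\<^sub>R e j) = (\<Sum>i\<in>UNIV. \<Sum>j\<in>UNIV. x $ i * x $ j * (e i \<bullet> e j))" .
    have "x \<bullet> (G *v x) = (\<Sum>i\<in>UNIV. (x $ i) *\<^sub>R e i) \<bullet> (\<Sum>j\<in>UNIV. (x $ j) *\<^sub>R e j)"
      using l r by simp
    then have "(\<Sum>i\<in>UNIV. (x $ i) *\<^sub>R e i) \<bullet> (\<Sum>i\<in>UNIV. (x $ i) *\<^sub>R e i) = 0" using that by simp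
    then show ?thesis using indep by simp
  qed
  have "inj (\<lambda>x. G *v x)"
  proof (rule injI)
    fix x y assume "G *v x = G *v y"
    then have "G *v (x - y) = 0" by (simp add: matrix_vector_mult_diff_distrib)
    then have "x - y = 0" by (rule zero)
    then show "x = y" by simp
  qed
  then have "det (matrix (\<lambda>x. G *v x)) \<noteq> 0" using det_nz_iff_inj[of "\<lambda>x. G *v x"] by simp
  then show ?thesis by (simp add: G_def)
qed

lemma facet_param:
  fixes W :: "'d::finite stpt set"
  assumes W: "finite W" "card W = CARD('d) + 1" "\<not> affine_dependent W"
  shows "det (fG (convex hull W)) \<noteq> 0" "convex hull W \<subseteq> fphi (convex hull W) ` refS"
proof -
  let ?S = "convex hull W"
  have vS: "verts ?S = W" by (rule verts_hull[OF W(3)])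
  have "W \<noteq> {}" using W by auto
  then have p0: "fp0 ?S \<in> W" unfolding fp0_def vS by (simp add: some_in_eq)
  define p0 where "p0 = fp0 ?S"
  have "card (W - {p0}) = CARD('d)" using W p0 by (simp add: p0_def)
  then have "\<exists>e :: 'd \<Rightarrow> 'd stpt. bij_betw e UNIV (W - {p0})"
    using finite_same_card_bij[of "UNIV :: 'd set" "W - {p0}"] W by auto
  then have bij: "bij_betw (fe ?S) UNIV (W - {p0})"
    unfolding fe_def vS p0_def[symmetric] by (rule someI_ex)
  define e where "e = fe ?S"
  have bij': "bij_betw e UNIV (W - {p0})" using bij by (simp add: e_def)
  have Wi: "W = insert p0 (W - {p0})" using p0 p0_def by auto
  have sumW: "(\<Sum>w\<in>W. g w) = g p0 + (\<Sum>i\<in>UNIV. g (e i))" for g :: "'d stpt \<Rightarrow> 'x::comm_monoid_add"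
  proof -
    have "(\<Sum>w\<in>W. g w) = g p0 + (\<Sum>w\<in>W - {p0}. g w)"
      using p0 W(1) p0_def by (simp add: sum.remove)
    also have "(\<Sum>w\<in>W - {p0}. g w) = (\<Sum>i\<in>UNIV. g (e i))"
      using sum.reindex_bij_betw[OF bij', of g] by simp
    finally show ?thesis .
  qed
  have einj: "inv_into UNIV e (e i) = i" for i
    using bij' by (simp add: bij_betw_def)
  have ene: "e i \<noteq> p0" "e i \<in> W" for i using bij' by (auto simp: bij_betw_def)
  have indep: "x = 0" if x: "(\<Sum>i\<in>UNIV. (x $ i) *\<^sub>R (e i - p0)) = 0" for x :: "real^'d"
  proof (rule ccontr)
    assume "x \<noteq> 0"
    then obtain i0 where i0: "x $ i0 \<noteq> 0" by (metis vec_eq_iff zero_index)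
    define u where "u w = (if w = p0 then - (\<Sum>i\<in>UNIV. x $ i) else x $ (inv_into UNIV e w))" for w
    have "sum u W = 0" by (simp add: sumW u_def ene einj)
    moreover have "(\<Sum>w\<in>W. u w *\<^sub>R w) = 0"
    proof -
      have "(\<Sum>w\<in>W. u w *\<^sub>R w) = (- (\<Sum>i\<in>UNIV. x $ i)) *\<^sub>R p0 + (\<Sum>i\<in>UNIV. (x $ i) *\<^sub>R e i)"
        by (simp add: sumW u_def ene einj)
      also have "\<dots> = (\<Sum>i\<in>UNIV. (x $ i) *\<^sub>R (e i - p0))"
        by (simp add: scaleR_diff_right sum_subtractf scaleR_sum_left)
      finally show ?thesis using x by simp
    qed
    moreover have "\<exists>v\<in>W. u v \<noteq> 0" using i0 ene einj by (intro bexI[of _ "e i0"]) (auto simp: u_def)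
    ultimately have "affine_dependent W" using affine_dependent_explicit_finite[OF W(1)] by blast
    then show False using W(3) by simp
  qed
  show "det (fG ?S) \<noteq> 0"
    unfolding fG_def e_def[symmetric] p0_def[symmetric] by (rule gram_det_nz) (use indep in auto)
  show "?S \<subseteq> fphi ?S ` refS"
  proof
    fix z assume "z \<in> ?S"
    then obtain \<mu> where \<mu>: "\<forall>x\<in>W. 0 \<le> \<mu> x" "sum \<mu> W = 1" "(\<Sum>x\<in>W. \<mu> x *\<^sub>R x) = z"
      unfolding convex_hull_finite[OF W(1)] by blast
    define y :: "real^'d" where "y = (\<chi> i. \<mu> (e i))"
    have "(\<Sum>i\<in>UNIV. y $ i) = 1 - \<mu> p0" using \<mu>(2) sumW[of \<mu>] by (simp add: y_def)
    then have "y \<in> refS" using \<mu>(1) ene p0 p0_def by (auto simp: refS_def y_def)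
    moreover have "fphi ?S y = z"
    proof -
      have "z = \<mu> p0 *\<^sub>R p0 + (\<Sum>i\<in>UNIV. \<mu> (e i) *\<^sub>R e i)" using \<mu>(3) sumW[of "\<lambda>x. \<mu> x *\<^sub>R x"] by simp
      moreover have "\<mu> p0 = 1 - (\<Sum>i\<in>UNIV. \<mu> (e i))" using \<mu>(2) sumW[of \<mu>] by simp
      ultimately show ?thesis
        by (simp add: fphi_def e_def[symmetric] p0_def[symmetric] y_def scaleR_diff_right sum_subtractf
            scaleR_sum_left algebra_simps)
    qed
    ultimately show "z \<in> fphi ?S ` refS" by blast
  qed
qed

lemma fint_sq_zero:
  fixes W :: "'d::finite stpt set"
  assumes W: "finite W" "card W = CARD('d) + 1" "\<not> affine_dependent W"
    and h: "continuous_on UNIV h" and z: "fint (convex hull W) (\<lambda>z. h z * h z) = 0"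
  shows "\<forall>z\<in>convex hull W. h z = 0"
proof -
  let ?S = "convex hull W"
  have "sqrt (det (fG ?S)) \<noteq> 0" using facet_param(1)[OF W] by simp
  then have i0: "integral refS (\<lambda>y. h (fphi ?S y) * h (fphi ?S y)) = 0" using z unfolding fint_alt by simp
  have hc: "continuous_on UNIV (\<lambda>z. h z * h z)" using h by (intro continuous_intros) auto
  have "continuous_on refS (\<lambda>y. h (fphi ?S y) * h (fphi ?S y))"
    by (rule continuous_on_compose2[OF hc fphi_cont[of _ ?S]]) auto
  then have "\<forall>y\<in>refS. h (fphi ?S y) * h (fphi ?S y) = 0"
    by (intro integral_zero_imp_zero[OF refS_compact refS_convex refS_interior _ _ i0]) auto
  then show ?thesis using facet_param(2)[OF W] by auto
qed

lemma opposite_normal: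
  fixes V1 V2 :: "'d::finite stpt set"
  assumes V1: "finite V1" "card V1 = CARD('d) + 2" "\<not> affine_dependent V1"
    and V2: "finite V2" "card V2 = CARD('d) + 2" "\<not> affine_dependent V2"
    and v1: "v1 \<in> V1" and v2: "v2 \<in> V2" and W: "V2 - {v2} = V1 - {v1}"
    and int: "convex hull V1 \<inter> convex hull V2 = convex hull (V1 - {v1})"
  shows "onormal (convex hull V2) (convex hull (V2 - {v2})) = - onormal (convex hull V1) (convex hull (V1 - {v1}))"
proof -
  define S where "S = convex hull (V1 - {v1})"
  define \<nu> where "\<nu> = onormal (convex hull V1) S"
  have "card (V1 - {v1}) = CARD('d) + 1" using V1 v1 by simp
  then have "V1 - {v1} \<noteq> {}" by (intro notI) simp
  then obtain w0 where w0: "w0 \<in> V1 - {v1}" by blast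
  have P1: "nprop (convex hull V1) S \<nu>" unfolding \<nu>_def S_def by (rule onormal_char(1)[OF V1 v1 w0])
  note f1 = nprop_facts[OF V1 v1 w0 P1[unfolded S_def]]
  have w0': "w0 \<in> V2 - {v2}" using w0 W by simp
  have key: "\<nu> \<bullet> (v2 - w0) \<ge> 0"
  proof (rule ccontr)
    assume neg: "\<not> \<nu> \<bullet> (v2 - w0) \<ge> 0"
    then have neg: "\<nu> \<bullet> (v2 - w0) < 0" by simp
    have "v2 \<in> affine hull V1" using full_affine_hull[OF V1] by simp
    then obtain \<beta> where \<beta>: "sum \<beta> V1 = 1" "(\<Sum>x\<in>V1. \<beta> x *\<^sub>R x) = v2"
      using affine_hull_finite[OF V1(1)] by blast
    have "v2 - w0 = (\<Sum>x\<in>V1. \<beta> x *\<^sub>R (x - w0))"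
      using \<beta> by (simp add: scaleR_diff_right sum_subtractf scaleR_sum_left[symmetric])
    then have "\<nu> \<bullet> (v2 - w0) = (\<Sum>x\<in>V1. \<beta> x * (\<nu> \<bullet> (x - w0)))"
      by (simp add: inner_sum_right)
    also have "\<dots> = \<beta> v1 * (\<nu> \<bullet> (v1 - w0)) + (\<Sum>x\<in>V1 - {v1}. \<beta> x * (\<nu> \<bullet> (x - w0)))"
      by (rule sum.remove[OF V1(1) v1])
    also have "(\<Sum>x\<in>V1 - {v1}. \<beta> x * (\<nu> \<bullet> (x - w0))) = 0"
    proof (rule sum.neutral, rule ballI)
      fix x assume "x \<in> V1 - {v1}"
      then have "x \<in> convex hull (V1 - {v1})" by (rule hull_inc)
      then show "\<beta> x * (\<nu> \<bullet> (x - w0)) = 0" using f1(1) by simp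
    qed
    finally have "\<nu> \<bullet> (v2 - w0) = \<beta> v1 * (\<nu> \<bullet> (v1 - w0))" by simp
    then have "\<beta> v1 * (\<nu> \<bullet> (v1 - w0)) < 0" using neg by simp
    then have bv1: "\<beta> v1 > 0" using f1(2) by (simp add: mult_less_0_iff)
    define N where "N = real (card (V1 - {v1}))"
    have N: "N = real CARD('d) + 1" using \<open>card (V1 - {v1}) = CARD('d) + 1\<close> by (simp add: N_def)
    have N1: "N \<ge> 1" using N by simp
    define M where "M = 1 + (\<Sum>x\<in>V1. \<bar>\<beta> x\<bar>)"
    have M1: "M \<ge> 1" unfolding M_def by (simp add: sum_nonneg)
    define t where "t = 1 / (2 * N * M)"
    have t0: "t > 0" using N1 M1 by (simp add: t_def)
    have t2: "t \<le> 1/2"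
    proof -
      have "1 * 1 \<le> N * M" by (rule mult_mono) (use N1 M1 in auto)
      then have "2 \<le> 2 * N * M" by simp
      then show ?thesis unfolding t_def by (simp add: divide_simps)
    qed
    define \<gamma> where "\<gamma> x = (if x = v1 then 0 else (1 - t) / N) + t * \<beta> x" for x
    have \<gamma>0: "\<gamma> x \<ge> 0" if x: "x \<in> V1" for x
    proof (cases "x = v1")
      case True then show ?thesis using bv1 t0 by (simp add: \<gamma>_def)
    next
      case False
      have bM: "\<bar>\<beta> x\<bar> \<le> M" using member_le_sum[of x V1 "\<lambda>x. \<bar>\<beta> x\<bar>"] x V1(1) by (simp add: M_def)
      have "t * \<bar>\<beta> x\<bar> \<le> t * M" using bM t0 by simp
      also have "t * M = 1 / (2 * N)" using M1 N1 by (simp add: t_def)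
      finally have a: "t * \<bar>\<beta> x\<bar> \<le> 1 / (2 * N)" .
      have b: "(1 - t) / N \<ge> 1 / (2 * N)" using t2 N1 by (simp add: divide_simps)
      have "- \<bar>\<beta> x\<bar> \<le> \<beta> x" by simp
      then have "t * (- \<bar>\<beta> x\<bar>) \<le> t * \<beta> x" using t0 by (intro mult_left_mono) auto
      then have "- (t * \<bar>\<beta> x\<bar>) \<le> t * \<beta> x" by simp
      then show ?thesis using a b False by (simp add: \<gamma>_def)
    qed
    have eqd: "V1 \<inter> (UNIV - {v1}) = V1 - {v1}" "V1 \<inter> - {v1} = V1 - {v1}" by auto
    have sumif: "(\<Sum>x\<in>V1. (if x = v1 then 0 else c)) = c * N" for c :: real
      by (simp add: sum.If_cases V1(1) N_def eqd)
    have sumifv: "(\<Sum>x\<in>V1. (if x = v1 then 0 else c) *\<^sub>R x) = c *\<^sub>R (\<Sum>x\<in>V1 - {v1}. x)" for c :: real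
    proof -
      have "(\<Sum>x\<in>V1. (if x = v1 then 0 else c) *\<^sub>R x) = (\<Sum>x\<in>V1. if x = v1 then 0 else c *\<^sub>R x)"
        by (rule sum.cong) auto
      also have "\<dots> = (\<Sum>x\<in>V1 - {v1}. c *\<^sub>R x)" by (simp add: sum.If_cases V1(1) eqd)
      finally show ?thesis by (simp add: scaleR_sum_right)
    qed
    have \<gamma>1: "sum \<gamma> V1 = 1"
      using N1 \<beta>(1) by (simp add: \<gamma>_def sum.distrib sumif sum_distrib_left[symmetric])
    define y where "y = (\<Sum>x\<in>V1. \<gamma> x *\<^sub>R x)"
    have yK1: "y \<in> convex hull V1"
    proof -
      have "(\<forall>x\<in>V1. 0 \<le> \<gamma> x) \<and> sum \<gamma> V1 = 1 \<and> (\<Sum>x\<in>V1. \<gamma> x *\<^sub>R x) = y"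
        using \<gamma>0 \<gamma>1 by (simp add: y_def)
      then show ?thesis unfolding convex_hull_finite[OF V1(1)] mem_Collect_eq by (rule exI[of _ \<gamma>])
    qed
    define c where "c = (\<Sum>x\<in>V1 - {v1}. (1 / N) *\<^sub>R x)"
    have cS: "c \<in> S"
    proof -
      have "(\<forall>x\<in>V1 - {v1}. 0 \<le> 1 / N) \<and> sum (\<lambda>x. 1 / N) (V1 - {v1}) = 1 \<and> (\<Sum>x\<in>V1 - {v1}. (1 / N) *\<^sub>R x) = c"
        using N1 by (simp add: c_def N_def[symmetric])
      then show ?thesis unfolding S_def convex_hull_finite[OF finite_Diff[OF V1(1)]] mem_Collect_eq by (rule exI[of _ "\<lambda>x. 1 / N"])
    qed
    have yc: "y = (1 - t) *\<^sub>R c + t *\<^sub>R v2"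
    proof -
      have "y = (\<Sum>x\<in>V1. (if x = v1 then 0 else (1 - t) / N) *\<^sub>R x) + t *\<^sub>R (\<Sum>x\<in>V1. \<beta> x *\<^sub>R x)"
        by (simp add: y_def \<gamma>_def scaleR_add_left sum.distrib scaleR_sum_right)
      also have "\<dots> = (1 - t) *\<^sub>R c + t *\<^sub>R v2"
        using N1 by (simp add: sumifv \<beta>(2) c_def scaleR_sum_right[symmetric])
      finally show ?thesis .
    qed
    have SK2: "S \<subseteq> convex hull V2" unfolding S_def W[symmetric] by (rule hull_mono) auto
    have "y \<in> convex hull V2"
      unfolding yc
      by (rule convexD[OF convex_convex_hull]) (use cS SK2 hull_inc[OF v2] t0 t2 in auto)
    then have "y \<in> S" using yK1 int S_def by blast
    then have "\<nu> \<bullet> (y - w0) = 0" using f1(1) S_def by blast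
    moreover have "\<nu> \<bullet> (c - w0) = 0" using f1(1) cS S_def by blast
    moreover have "y - w0 = (1 - t) *\<^sub>R (c - w0) + t *\<^sub>R (v2 - w0)"
      unfolding yc by (simp add: algebra_simps)
    ultimately have "t * (\<nu> \<bullet> (v2 - w0)) = 0" by (simp add: inner_add_right)
    then show False using t0 neg by simp
  qed
  have "nprop (convex hull V2) (convex hull (V2 - {v2})) (- \<nu>)"
    unfolding nprop_def
  proof (intro conjI ballI)
    show "norm (- \<nu>) = 1" using P1 by (simp add: nprop_def)
    fix y p assume y: "y \<in> convex hull V2" and p: "p \<in> convex hull (V2 - {v2})"
    have "(- \<nu>) \<bullet> (y - w0) \<le> 0"
    proof (rule hull_halfspace[OF _ y])
      fix x assume x: "x \<in> V2"
      show "(- \<nu>) \<bullet> (x - w0) \<le> 0"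
      proof (cases "x = v2")
        case True then show ?thesis using key by simp
      next
        case False then have "x \<in> V1 - {v1}" using x W by blast
        then have "x \<in> convex hull (V1 - {v1})" by (rule hull_inc)
        then show ?thesis using f1(1) by simp
      qed
    qed
    moreover have "\<nu> \<bullet> (p - w0) = 0" using p f1(1) W by simp
    ultimately show "(- \<nu>) \<bullet> (y - p) \<le> 0" by (simp add: inner_diff_right)
  qed
  then have "- \<nu> = onormal (convex hull V2) (convex hull (V2 - {v2}))"
    by (rule onormal_char(2)[OF V2 v2 w0'])
  then show ?thesis unfolding \<nu>_def S_def by simp
qed

lemma dtime_zero[simp]: "dtime (\<lambda>z. 0) z = 0" by (simp add: dtime_def vec_eq_iff)
lemma dnormal_zero[simp]: "dnormal (\<lambda>z. 0) n z = 0" by (simp add: dnormal_def vec_eq_iff)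
lemma conv_term_zero[simp]: "conv_term u w (\<lambda>z. 0) z = 0" by (simp add: conv_term_def)
lemma grad_inner_zero[simp]: "grad_inner u (\<lambda>z. 0) z = 0" by (simp add: grad_inner_def)
lemma sdiv_zero[simp]: "sdiv (\<lambda>z. 0) z = 0" by (simp add: sdiv_def)

lemma forms_zero:
  "t_form T FN u ub w wb (\<lambda>K z. 0) (\<lambda>S z. 0) = 0"
  "a_form T nu alpha u ub (\<lambda>K z. 0) (\<lambda>S z. 0) = 0"
  "b_form T p pb (\<lambda>K z. 0) (\<lambda>S z. 0) = 0"
  "rhs_form T FN f g um (\<lambda>K z. 0) (\<lambda>S z. 0) = 0"
  by (simp_all add: t_form_def a_form_def b_form_def rhs_form_def cong: if_cong)

lemma Vstar_zero: "Vstar k T FD (\<lambda>K z. 0) (\<lambda>S z. 0)"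
  by (simp add: Vstar_def vpoly_fun_def poly_fun_zero)

lemma facet_obtain:
  assumes "st_simplex (K :: 'd::finite stpt set)" "S \<in> facets K"
  obtains V v where "finite V" "card V = CARD('d) + 2" "\<not> affine_dependent V" "K = convex hull V"
    "verts K = V" "v \<in> V" "S = convex hull (V - {v})"
proof -
  obtain V where V: "finite V" "card V = CARD('d) + 2" "\<not> affine_dependent V" "K = convex hull V" "verts K = V"
    using simplex_obtain[OF assms(1)] by blast
  then obtain v where "v \<in> V" "S = convex hull (V - {v})" using assms(2) by (auto simp: facets_def)
  then show ?thesis using that V by blast
qed

lemma facet_W:
  fixes V :: "'d::finite stpt set"
  assumes "finite V" "card V = CARD('d) + 2" "\<not> affine_dependent V" "v \<in> V"
  shows "finite (V - {v})" "card (V - {v}) = CARD('d) + 1" "\<not> affine_dependent (V - {v})"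
  using assms affine_dependent_subset[of "V - {v}" V] by auto

lemma finite_Qfacets:
  assumes "st_simplex (K :: 'd::finite stpt set)" shows "finite (Qfacets K)"
proof -
  obtain V where V: "finite V" "verts K = V" using simplex_obtain[OF assms] by blast
  have "facets K = (\<lambda>v. convex hull (verts K - {v})) ` verts K" unfolding facets_def by auto
  then have "finite (facets K)" using V by simp
  then show ?thesis unfolding Qfacets_def by simp
qed

lemma b_form_facet:
  assumes T: "finite T" "\<forall>K\<in>T. st_simplex K"
  shows "b_form T (\<lambda>K z. 0) (\<lambda>S'. if S' = S then h else (\<lambda>z. 0)) u ub
       = (\<Sum>K\<in>{K\<in>T. S \<in> Qfacets K}. fint S (\<lambda>z. ((u K z - ub S z) \<bullet> nx K S) * h z))"
proof -
  have inner: "(\<Sum>S'\<in>Qfacets K. fint S' (\<lambda>z. ((u K z - ub S' z) \<bullet> nx K S') * (if S' = S then h else (\<lambda>z. 0)) z))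
      = (if S \<in> Qfacets K then fint S (\<lambda>z. ((u K z - ub S z) \<bullet> nx K S) * h z) else 0)" if K: "K \<in> T" for K
  proof -
    have "(\<Sum>S'\<in>Qfacets K. fint S' (\<lambda>z. ((u K z - ub S' z) \<bullet> nx K S') * (if S' = S then h else (\<lambda>z. 0)) z))
        = (\<Sum>S'\<in>Qfacets K. if S' = S then fint S (\<lambda>z. ((u K z - ub S z) \<bullet> nx K S) * h z) else 0)"
      by (rule sum.cong) auto
    also have "\<dots> = (if S \<in> Qfacets K then fint S (\<lambda>z. ((u K z - ub S z) \<bullet> nx K S) * h z) else 0)"
      using finite_Qfacets[of K] K T by (simp add: sum.delta')
    finally show ?thesis .
  qed
  have "b_form T (\<lambda>K z. 0) (\<lambda>S'. if S' = S then h else (\<lambda>z. 0)) u ub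
      = (\<Sum>K\<in>T. if S \<in> Qfacets K then fint S (\<lambda>z. ((u K z - ub S z) \<bullet> nx K S) * h z) else 0)"
    unfolding b_form_def using inner by simp
  also have "\<dots> = (\<Sum>K\<in>{K\<in>T. S \<in> Qfacets K}. fint S (\<lambda>z. ((u K z - ub S z) \<bullet> nx K S) * h z))"
    by (rule sum.inter_filter[symmetric]) (rule T(1))
  finally show ?thesis .
qed

lemma b_form_cell:
  assumes T: "finite T" and K0: "K0 \<in> T"
  shows "b_form T (\<lambda>K. if K = K0 then r else (\<lambda>z. 0)) (\<lambda>S z. 0) u ub = - integral K0 (\<lambda>z. r z * sdiv (u K0) z)"
proof -
  have "(\<Sum>K\<in>T. integral K (\<lambda>z. (if K = K0 then r else (\<lambda>z. 0)) z * sdiv (u K) z))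
      = (\<Sum>K\<in>T. if K = K0 then integral K0 (\<lambda>z. r z * sdiv (u K0) z) else 0)"
    by (rule sum.cong) auto
  also have "\<dots> = integral K0 (\<lambda>z. r z * sdiv (u K0) z)" using T K0 by (simp add: sum.delta')
  finally show ?thesis unfolding b_form_def by simp
qed

lemma Qstar_facet: "poly_fun k h \<Longrightarrow> Qstar k T (\<lambda>K z. 0) (\<lambda>S'. if S' = S then h else (\<lambda>z. 0))"
  unfolding Qstar_def
proof (intro conjI ballI)
  fix K show "poly_fun (k - 1) ((\<lambda>K z. 0) K)" by (simp add: poly_fun_zero)
next
  fix S' assume "poly_fun k h"
  then show "poly_fun k ((\<lambda>S'. if S' = S then h else (\<lambda>z. 0)) S')"
    by (cases "S' = S") (simp_all add: poly_fun_zero)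
qed

lemma Qstar_cell: "poly_fun (k - 1) r \<Longrightarrow> Qstar k T (\<lambda>K. if K = K0 then r else (\<lambda>z. 0)) (\<lambda>S z. 0)"
  unfolding Qstar_def
proof (intro conjI ballI)
  fix K assume "poly_fun (k - 1) r"
  then show "poly_fun (k - 1) ((\<lambda>K. if K = K0 then r else (\<lambda>z. 0)) K)"
    by (cases "K = K0") (simp_all add: poly_fun_zero)
next
  fix S' show "poly_fun k ((\<lambda>S z. 0) S')" by (simp add: poly_fun_zero)
qed

theorem mainTheorem1:
  fixes T FD FN :: "'d::finite stpt set set"
    and tn tn1 nu alpha :: real and k :: nat
    and u ub w wb :: "'d stpt set \<Rightarrow> 'd stpt \<Rightarrow> real^'d"
    and p pb :: "'d stpt set \<Rightarrow> 'd stpt \<Rightarrow> real"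
    and f g um :: "'d stpt \<Rightarrow> real^'d"
  assumes "CARD('d) = 2 \<or> CARD('d) = 3"
    and "st_mesh T tn tn1"
    and "FD \<inter> FN = {}" and "FD \<union> FN = FB T"
    and "nu > 0" and "alpha > 0" and "k \<ge> 1"
    and "Vstar k T FD w wb"
    and "Vstar k T FD u ub" and "Qstar k T p pb"
    and "\<forall>v vb q qb. Vstar k T FD v vb \<longrightarrow> Qstar k T q qb \<longrightarrow>
           t_form T FN u ub w wb v vb + a_form T nu alpha u ub v vb + b_form T p pb v vb
             - b_form T q qb u ub = rhs_form T FN f g um v vb"
  shows "(\<forall>K\<in>T. \<forall>z\<in>K. sdiv (u K) z = 0) \<and>
         (\<forall>S\<in>FI T. \<forall>K1\<in>cells_of T S. \<forall>K2\<in>cells_of T S. K1 \<noteq> K2 \<longrightarrow>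
             (\<forall>z\<in>S. u K1 z \<bullet> nx K1 S + u K2 z \<bullet> nx K2 S = 0)) \<and>
         (\<forall>S\<in>FB T. \<forall>K\<in>cells_of T S. \<forall>z\<in>S. u K z \<bullet> nx K S = ub S z \<bullet> nx K S)"
proof -
  note mesh = assms(2)[unfolded st_mesh_def]
  have Tfin: "finite T" by (rule conjunct1[OF mesh])
  have Tsim: "\<forall>K\<in>T. st_simplex K" by (rule conjunct1[OF conjunct2[OF conjunct2[OF conjunct2[OF mesh]]]])
  have conf0: "\<forall>K\<in>T. \<forall>K'\<in>T. K \<noteq> K' \<longrightarrow> K \<inter> K' = convex hull (verts K \<inter> verts K')"
    by (rule conjunct1[OF conjunct2[OF conjunct2[OF conjunct2[OF conjunct2[OF mesh]]]]])
  have conf: "\<And>K K'. K \<in> T \<Longrightarrow> K' \<in> T \<Longrightarrow> K \<noteq> K' \<Longrightarrow> K \<inter> K' = convex hull (verts K \<inter> verts K')"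
    using conf0 by blast
  have uV: "\<And>K. K \<in> T \<Longrightarrow> vpoly_fun k (u K)" "\<And>S. S \<in> Fn T \<Longrightarrow> vpoly_fun k (ub S)"
    using assms(9) by (auto simp: Vstar_def)
  have bz: "b_form T q qb u ub = 0" if "Qstar k T q qb" for q qb
  proof -
    have "t_form T FN u ub w wb (\<lambda>K z. 0) (\<lambda>S z. 0) + a_form T nu alpha u ub (\<lambda>K z. 0) (\<lambda>S z. 0)
        + b_form T p pb (\<lambda>K z. 0) (\<lambda>S z. 0) - b_form T q qb u ub = rhs_form T FN f g um (\<lambda>K z. 0) (\<lambda>S z. 0)"
      using assms(11) Vstar_zero[of k T FD] that by blast
    then show ?thesis by (simp add: forms_zero)
  qed
  have polycont: "continuous_on A F" if "poly_fun k' F" for k' F and A :: "'d stpt set"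
    using poly_fun_continuous[OF that] continuous_on_subset by blast
  have P1: "\<forall>z\<in>K0. sdiv (u K0) z = 0" if K0: "K0 \<in> T" for K0
  proof -
    define r where "r = sdiv (u K0)"
    have rp: "poly_fun (k - 1) r" unfolding r_def by (rule poly_fun_sdiv[OF uV(1)[OF K0]])
    have "Qstar k T (\<lambda>K. if K = K0 then r else (\<lambda>z. 0)) (\<lambda>S z. 0)"
      by (rule Qstar_cell[OF rp])
    then have "b_form T (\<lambda>K. if K = K0 then r else (\<lambda>z. 0)) (\<lambda>S z. 0) u ub = 0" by (rule bz)
    then have i0: "integral K0 (\<lambda>z. r z * r z) = 0" using b_form_cell[OF Tfin K0, of r u ub] by (simp add: r_def)
    have rc: "continuous_on K0 (\<lambda>z. r z * r z)" using polycont[OF rp] polycont[OF rp] by (rule continuous_on_mult)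
    have "\<forall>z\<in>K0. r z * r z = 0"
      by (rule integral_zero_imp_zero[OF simplex_interior[OF Tsim[rule_format, OF K0]] rc _ i0]) simp
    then show ?thesis by (simp add: r_def)
  qed
  have P3: "\<forall>z\<in>S. u K z \<bullet> nx K S = ub S z \<bullet> nx K S" if S: "S \<in> FB T" and K: "K \<in> cells_of T S" for S K
  proof -
    have KT: "K \<in> T" and SK: "S \<in> facets K" using K by (auto simp: cells_of_def)
    have fin: "finite (cells_of T S)" using Tfin by (simp add: cells_of_def)
    have "card (cells_of T S) = 1" using S by (simp add: FB_def)
    then obtain x where "cells_of T S = {x}" by (rule card_1_singletonE)
    then have c1: "cells_of T S = {K}" using K by simp
    have SF: "S \<in> Fn T" using S by (simp add: FB_def)
    then obtain K' where K': "K' \<in> T" "S \<in> Qfacets K'" unfolding Fn_def by blast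
    then have "K' \<in> cells_of T S" by (simp add: cells_of_def Qfacets_def)
    then have "K' = K" using c1 by simp
    have filt: "{K\<in>T. S \<in> Qfacets K} = {K}"
    proof
      show "{K\<in>T. S \<in> Qfacets K} \<subseteq> {K}"
      proof
        fix x assume "x \<in> {K\<in>T. S \<in> Qfacets K}"
        then have "x \<in> cells_of T S" by (simp add: cells_of_def Qfacets_def)
        then show "x \<in> {K}" using c1 by simp
      qed
      show "{K} \<subseteq> {K\<in>T. S \<in> Qfacets K}" using K' \<open>K' = K\<close> by auto
    qed
    define h where "h z = (u K z - ub S z) \<bullet> nx K S" for z
    have hp: "poly_fun k h" unfolding h_def by (rule poly_fun_inner[OF vpoly_fun_diff[OF uV(1)[OF KT] uV(2)[OF SF]]])
    have "Qstar k T (\<lambda>K z. 0) (\<lambda>S'. if S' = S then h else (\<lambda>z. 0))"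
      by (rule Qstar_facet[OF hp])
    then have "b_form T (\<lambda>K z. 0) (\<lambda>S'. if S' = S then h else (\<lambda>z. 0)) u ub = 0" by (rule bz)
    then have fS: "fint S (\<lambda>z. h z * h z) = 0"
      unfolding b_form_facet[OF Tfin Tsim] filt by (simp add: h_def)
    obtain V v where V: "finite V" "card V = CARD('d) + 2" "\<not> affine_dependent V"
      "K = convex hull V" "verts K = V" "v \<in> V" "S = convex hull (V - {v})"
      by (rule facet_obtain[OF Tsim[rule_format, OF KT] SK])
    have fz: "fint (convex hull (V - {v})) (\<lambda>z. h z * h z) = 0" using fS unfolding V(7) .
    have "\<forall>z\<in>convex hull (V - {v}). h z = 0"
      by (rule fint_sq_zero[OF facet_W[OF V(1-3,6)] poly_fun_continuous[OF hp] fz])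
    then have "\<forall>z\<in>S. h z = 0" unfolding V(7) .
    then show ?thesis by (simp add: h_def inner_diff_left)
  qed
  have P2: "\<forall>z\<in>S. u K1 z \<bullet> nx K1 S + u K2 z \<bullet> nx K2 S = 0"
    if S: "S \<in> FI T" and K1: "K1 \<in> cells_of T S" and K2: "K2 \<in> cells_of T S" and ne: "K1 \<noteq> K2" for S K1 K2
  proof -
    have K1T: "K1 \<in> T" and SK1: "S \<in> facets K1" using K1 by (auto simp: cells_of_def)
    have K2T: "K2 \<in> T" and SK2: "S \<in> facets K2" using K2 by (auto simp: cells_of_def)
    have fin: "finite (cells_of T S)" using Tfin by (simp add: cells_of_def)
    have c2: "cells_of T S = {K1, K2}"
    proof -
      have "card (cells_of T S) = 2" using S by (simp add: FI_def)
      moreover have "{K1, K2} \<subseteq> cells_of T S" using K1 K2 by auto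
      moreover have "card {K1, K2} = 2" using ne by simp
      ultimately have "{K1, K2} = cells_of T S" using card_subset_eq[OF fin] by simp
      then show ?thesis by simp
    qed
    obtain V1 v1 where V1: "finite V1" "card V1 = CARD('d) + 2" "\<not> affine_dependent V1"
      "K1 = convex hull V1" "verts K1 = V1" "v1 \<in> V1" "S = convex hull (V1 - {v1})"
      by (rule facet_obtain[OF Tsim[rule_format, OF K1T] SK1])
    obtain V2 v2 where V2: "finite V2" "card V2 = CARD('d) + 2" "\<not> affine_dependent V2"
      "K2 = convex hull V2" "verts K2 = V2" "v2 \<in> V2" "S = convex hull (V2 - {v2})"
      by (rule facet_obtain[OF Tsim[rule_format, OF K2T] SK2])
    have W: "V2 - {v2} = V1 - {v1}"
    proof -
      have "verts S = V1 - {v1}" using V1(7) verts_hull facet_W(3)[OF V1(1-3,6)] by simp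
      moreover have "verts S = V2 - {v2}" using V2(7) verts_hull facet_W(3)[OF V2(1-3,6)] by simp
      ultimately show ?thesis by simp
    qed
    have v12: "v1 \<noteq> v2"
    proof
      assume "v1 = v2"
      have "V1 = insert v1 (V1 - {v1})" by (rule insert_Diff[symmetric, OF V1(6)])
      also have "\<dots> = insert v2 (V2 - {v2})" using W \<open>v1 = v2\<close> by simp
      also have "\<dots> = V2" by (rule insert_Diff[OF V2(6)])
      finally have "V1 = V2" .
      then show False using ne V1(4) V2(4) by simp
    qed
    have "V1 \<inter> V2 = V1 - {v1}" using W v12 V1(6) V2(6) by blast
    then have int: "convex hull V1 \<inter> convex hull V2 = convex hull (V1 - {v1})"
      using conf[OF K1T K2T ne] V1(4,5) V2(4,5) by simp
    have onn: "onormal K2 S = - onormal K1 S"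
      using opposite_normal[OF V1(1-3) V2(1-3) V1(6) V2(6) W int] V1(4,7) V2(4,7) by simp
    then have nx2: "nx K2 S = - nx K1 S" and nt2: "nt K2 S = - nt K1 S"
      by (simp_all add: nx_def nt_def)
    have SF: "S \<in> Fn T" using S by (simp add: FI_def)
    then obtain K' where K': "K' \<in> T" "S \<in> Qfacets K'" unfolding Fn_def by blast
    then have "K' \<in> cells_of T S" by (simp add: cells_of_def Qfacets_def)
    then have "K' = K1 \<or> K' = K2" using c2 by simp
    then have "\<bar>nt K1 S\<bar> \<noteq> 1" using K' nt2 by (auto simp: Qfacets_def)
    then have Q12: "S \<in> Qfacets K1" "S \<in> Qfacets K2" using SK1 SK2 nt2 by (auto simp: Qfacets_def)
    have filt: "{K\<in>T. S \<in> Qfacets K} = {K1, K2}"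
    proof
      show "{K\<in>T. S \<in> Qfacets K} \<subseteq> {K1, K2}"
      proof
        fix x assume "x \<in> {K\<in>T. S \<in> Qfacets K}"
        then have "x \<in> cells_of T S" by (simp add: cells_of_def Qfacets_def)
        then show "x \<in> {K1, K2}" using c2 by simp
      qed
      show "{K1, K2} \<subseteq> {K\<in>T. S \<in> Qfacets K}" using Q12 K1T K2T by auto
    qed
    define h where "h z = u K1 z \<bullet> nx K1 S + u K2 z \<bullet> nx K2 S" for z
    have hp: "poly_fun k h" unfolding h_def
      by (rule poly_fun_add[OF poly_fun_inner[OF uV(1)[OF K1T]] poly_fun_inner[OF uV(1)[OF K2T]]])
    have g1: "poly_fun k (\<lambda>z. (u K1 z - ub S z) \<bullet> nx K1 S)"
      by (rule poly_fun_inner[OF vpoly_fun_diff[OF uV(1)[OF K1T] uV(2)[OF SF]]])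
    have g2: "poly_fun k (\<lambda>z. (u K2 z - ub S z) \<bullet> nx K2 S)"
      by (rule poly_fun_inner[OF vpoly_fun_diff[OF uV(1)[OF K2T] uV(2)[OF SF]]])
    have "Qstar k T (\<lambda>K z. 0) (\<lambda>S'. if S' = S then h else (\<lambda>z. 0))"
      by (rule Qstar_facet[OF hp])
    then have "b_form T (\<lambda>K z. 0) (\<lambda>S'. if S' = S then h else (\<lambda>z. 0)) u ub = 0" by (rule bz)
    then have "fint S (\<lambda>z. ((u K1 z - ub S z) \<bullet> nx K1 S) * h z) + fint S (\<lambda>z. ((u K2 z - ub S z) \<bullet> nx K2 S) * h z) = 0"
      unfolding b_form_facet[OF Tfin Tsim] filt using ne by simp
    moreover have c1: "continuous_on UNIV (\<lambda>z. ((u K1 z - ub S z) \<bullet> nx K1 S) * h z)"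
      using polycont[OF g1] polycont[OF hp] by (rule continuous_on_mult)
    moreover have c2: "continuous_on UNIV (\<lambda>z. ((u K2 z - ub S z) \<bullet> nx K2 S) * h z)"
      using polycont[OF g2] polycont[OF hp] by (rule continuous_on_mult)
    ultimately have "fint S (\<lambda>z. ((u K1 z - ub S z) \<bullet> nx K1 S) * h z + ((u K2 z - ub S z) \<bullet> nx K2 S) * h z) = 0"
      using fint_add[OF c1 c2, of S] by simp
    moreover have "(\<lambda>z. ((u K1 z - ub S z) \<bullet> nx K1 S) * h z + ((u K2 z - ub S z) \<bullet> nx K2 S) * h z) = (\<lambda>z. h z * h z)"
      by (rule ext) (simp add: h_def nx2 inner_diff_left algebra_simps)
    ultimately have "fint S (\<lambda>z. h z * h z) = 0" by simp
    then have fz: "fint (convex hull (V1 - {v1})) (\<lambda>z. h z * h z) = 0" unfolding V1(7) .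
    have "\<forall>z\<in>convex hull (V1 - {v1}). h z = 0"
      by (rule fint_sq_zero[OF facet_W[OF V1(1-3,6)] poly_fun_continuous[OF hp] fz])
    then have "\<forall>z\<in>S. h z = 0" unfolding V1(7) .
    then show ?thesis by (simp add: h_def)
  qed
  show ?thesis using P1 P2 P3 by blast
qed

end
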